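(* If $\mathbf{X}\in\{0,1\}^{m\times n}$ is totally balanced, then $\mathcal{S}^Q(\mathbf{X})$ is totally balanced for every nonempty $Q\subseteq\mathrm{supp}(\mathbf{X})$.
   Context: $\mathrm{supp}(\mathbf{X})=\{(i,j):x_{i,j}=1\}$. For $t\ge 3$, a $t\times t$ cycle matrix is a binary matrix which, after permuting rows and columns, equals the matrix $\mathbf{C}_t$ whose $1$s are exactly at $(i,i),(i,i+1)$ for $i\in[t-1]$ and at $(t,1),(t,t)$. A binary matrix is totally balanced if it has no submatrix (obtained by deleting rows and columns) that is a $t\times t$ cycle matrix for any $t\ge 3$. Stretching: for a nonempty $Q=\{(\ell_1,k_1),\dots,(\ell_q,k_q)\}\subseteq\mathrm{supp}(\mathbf{X})$ listed in lexicographic order (by row index, then column index), $\mathcal{S}^Q(\mathbf{X})$ is the $(m+q)\times(n+q)$ binary matrix whose top-left $m\times n$ block is $\mathbf{X}$, whose entries at $(\ell_t,n+t)$, $(m+t,k_t)$ and $(m+t,n+t)$ equal $1$ for each $t\in[q]$, and all of whose other entries are $0$. *)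

theory Defs
  imports Main "HOL-Library.Product_Lexorder" "HOL-Combinatorics.Permutations"
begin

text \<open>Binary matrices are represented as functions nat => nat => bool together with
explicit dimensions m (rows) and n (columns); indices are 0-based, i.e. row i < m,
column j < n.\<close>

definition supp :: "nat \<Rightarrow> nat \<Rightarrow> (nat \<Rightarrow> nat \<Rightarrow> bool) \<Rightarrow> (nat \<times> nat) set" where
  "supp m n X = {(i, j). i < m \<and> j < n \<and> X i j}"

definition cycleC :: "nat \<Rightarrow> nat \<Rightarrow> nat \<Rightarrow> bool" where
  "cycleC t i j = (i < t \<and> j < t \<and> (i = j \<or> (i + 1 < t \<and> j = i + 1) \<or> (i = t - 1 \<and> j = 0)))"

definition is_cycle_matrix :: "nat \<Rightarrow> (nat \<Rightarrow> nat \<Rightarrow> bool) \<Rightarrow> bool" where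
  "is_cycle_matrix t A = (3 \<le> t \<and> (\<exists>p q. p permutes {..<t} \<and> q permutes {..<t} \<and>
      (\<forall>i<t. \<forall>j<t. A (p i) (q j) = cycleC t i j)))"

definition totally_balanced :: "nat \<Rightarrow> nat \<Rightarrow> (nat \<Rightarrow> nat \<Rightarrow> bool) \<Rightarrow> bool" where
  "totally_balanced m n X = (\<forall>t\<ge>3. \<forall>r c.
      strict_mono_on {..<t} r \<and> r ` {..<t} \<subseteq> {..<m} \<and>
      strict_mono_on {..<t} c \<and> c ` {..<t} \<subseteq> {..<n} \<longrightarrow>
      \<not> is_cycle_matrix t (\<lambda>i j. X (r i) (c j)))"

text \<open>Stretching: qs lists Q in lexicographic order; the result is an (m+q) x (n+q) matrix.\<close>
definition stretch :: "nat \<Rightarrow> nat \<Rightarrow> (nat \<Rightarrow> nat \<Rightarrow> bool) \<Rightarrow> (nat \<times> nat) set \<Rightarrow> nat \<Rightarrow> nat \<Rightarrow> bool" where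
  "stretch m n X Q = (let qs = sorted_list_of_set Q in (\<lambda>i j.
      if i < m \<and> j < n then X i j
      else (\<exists>t < length qs. (i = fst (qs ! t) \<and> j = n + t) \<or> (i = m + t \<and> j = snd (qs ! t))
                             \<or> (i = m + t \<and> j = n + t))))"

end

theory Submission
  imports Defs
begin

definition sc :: "nat \<Rightarrow> nat \<Rightarrow> nat" where "sc t i = (if i+1<t then i+1 else 0)"
definition pc :: "nat \<Rightarrow> nat \<Rightarrow> nat" where "pc t j = (if j=0 then t-1 else j-1)"

lemma cyc_row: "3 \<le> t \<Longrightarrow> i<t \<Longrightarrow> cycleC t i i \<and> cycleC t i (sc t i) \<and> sc t i < t \<and> sc t i \<noteq> i"
  by (auto simp: cycleC_def sc_def)

lemma cyc_col: "3 \<le> t \<Longrightarrow> j<t \<Longrightarrow> cycleC t (pc t j) j \<and> pc t j < t \<and> pc t j \<noteq> j"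
  by (auto simp: cycleC_def pc_def)

lemma cyc_uniq: "3 \<le> t \<Longrightarrow> i<t \<Longrightarrow> cycleC t L i \<Longrightarrow> cycleC t L (sc t i) \<Longrightarrow> L = i"
  by (auto simp: cycleC_def sc_def split: if_splits)

lemma qs_facts:
  assumes "Q \<subseteq> supp m n X" "finite Q" "s < card Q"
  shows "fst (sorted_list_of_set Q ! s) < m \<and> snd (sorted_list_of_set Q ! s) < n
     \<and> X (fst (sorted_list_of_set Q ! s)) (snd (sorted_list_of_set Q ! s))"
proof -
  have "sorted_list_of_set Q ! s \<in> Q" using assms
    by (metis distinct_card distinct_sorted_list_of_set nth_mem set_sorted_list_of_set)
  then show ?thesis using assms(1) by (auto simp: supp_def)
qed

lemma len_qs: "finite Q \<Longrightarrow> length (sorted_list_of_set Q) = card Q"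
  by (metis distinct_card distinct_sorted_list_of_set set_sorted_list_of_set)

lemma stretch_old: "i<m \<Longrightarrow> j<n \<Longrightarrow> stretch m n X Q i j = X i j"
  by (simp add: stretch_def Let_def)

lemma stretch_row:
  assumes "Q \<subseteq> supp m n X" "finite Q" "s < card Q"
  shows "stretch m n X Q (m+s) j = (j = snd (sorted_list_of_set Q ! s) \<or> j = n+s)"
proof -
  have F: "\<And>u. u < length (sorted_list_of_set Q) \<Longrightarrow> fst (sorted_list_of_set Q ! u) < m \<and> snd (sorted_list_of_set Q ! u) < n"
    using qs_facts[OF assms(1,2)] len_qs[OF assms(2)] by auto
  show ?thesis using F[of s] assms(3) len_qs[OF assms(2)]
    unfolding stretch_def Let_def
    apply (auto)
    using F by fastforce+
qed

lemma stretch_col: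
  assumes "Q \<subseteq> supp m n X" "finite Q" "s < card Q" "i < m"
  shows "stretch m n X Q i (n+s) = (i = fst (sorted_list_of_set Q ! s))"
  using assms len_qs[OF assms(2)] unfolding stretch_def Let_def by auto


theorem lemma3:
  fixes m n :: nat and X :: "nat \<Rightarrow> nat \<Rightarrow> bool" and Q :: "(nat \<times> nat) set"
  assumes "totally_balanced m n X"
    and "Q \<noteq> {}" and "Q \<subseteq> supp m n X"
  shows "totally_balanced (m + card Q) (n + card Q) (stretch m n X Q)"
  unfolding totally_balanced_def
proof (intro allI impI notI)
  fix t :: nat and r c :: "nat \<Rightarrow> nat"
  assume t3: "3 \<le> t"
  assume rc: "strict_mono_on {..<t} r \<and> r ` {..<t} \<subseteq> {..<m + card Q} \<and>
       strict_mono_on {..<t} c \<and> c ` {..<t} \<subseteq> {..<n + card Q}"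
  assume "is_cycle_matrix t (\<lambda>i j. stretch m n X Q (r i) (c j))"
  then obtain p q where p: "p permutes {..<t}" and q: "q permutes {..<t}"
    and B: "\<And>i j. i<t \<Longrightarrow> j<t \<Longrightarrow> stretch m n X Q (r (p i)) (c (q j)) = cycleC t i j"
    unfolding is_cycle_matrix_def by blast
  let ?Y = "stretch m n X Q"
  define R where "R = r \<circ> p"
  define C where "C = c \<circ> q"
  have fin: "finite Q"
  proof -
    have "supp m n X \<subseteq> {..<m} \<times> {..<n}" by (auto simp: supp_def)
    then have "finite (supp m n X)" using finite_subset by blast
    then show ?thesis using assms(3) finite_subset by blast
  qed
  have pt: "\<And>i. i<t \<Longrightarrow> p i < t" using permutes_in_image[OF p] by simp
  have qt: "\<And>i. i<t \<Longrightarrow> q i < t" using permutes_in_image[OF q] by simp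
  have injr: "inj_on r {..<t}" using rc strict_mono_on_imp_inj_on by blast
  have injc: "inj_on c {..<t}" using rc strict_mono_on_imp_inj_on by blast
  have injp: "inj p" using p permutes_inj by blast
  have injq: "inj q" using q permutes_inj by blast
  have Rinj: "\<And>i j. i<t \<Longrightarrow> j<t \<Longrightarrow> R i = R j \<Longrightarrow> i = j"
    unfolding R_def using injr injp pt by (auto dest: inj_onD injD)
  have Cinj: "\<And>i j. i<t \<Longrightarrow> j<t \<Longrightarrow> C i = C j \<Longrightarrow> i = j"
    unfolding C_def using injc injq qt by (auto dest: inj_onD injD)
  have Rb: "\<And>i. i<t \<Longrightarrow> R i < m + card Q" unfolding R_def using rc pt by auto
  have Cb: "\<And>i. i<t \<Longrightarrow> C i < n + card Q" unfolding C_def using rc qt by auto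
  have BB: "\<And>i j. i<t \<Longrightarrow> j<t \<Longrightarrow> ?Y (R i) (C j) = cycleC t i j"
    unfolding R_def C_def using B by simp
  let ?qs = "sorted_list_of_set Q"
  show False
  proof (cases "\<exists>i<t. m \<le> R i")
    case True
    then obtain i where i: "i<t" "m \<le> R i" by blast
    define s where "s = R i - m"
    have s: "s < card Q" "R i = m + s" using Rb[OF i(1)] i unfolding s_def by auto
    define k where "k = snd (?qs ! s)"
    define l where "l = fst (?qs ! s)"
    have kl: "k < n" "l < m" "X l k" using qs_facts[OF assms(3) fin s(1)] unfolding k_def l_def by auto
    have row: "\<And>j. ?Y (R i) j = (j = k \<or> j = n + s)"
      using stretch_row[OF assms(3) fin s(1)] s(2) k_def by simp
    note ci = cyc_row[OF t3 i(1)]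
    have "?Y (R i) (C i)" "?Y (R i) (C (sc t i))" using BB ci i by auto
    moreover have "C i \<noteq> C (sc t i)" using Cinj ci i by metis
    ultimately obtain J K where JK: "{J, K} = {i, sc t i}" "C J = n + s" "C K = k"
      using row by (metis insert_commute)
    have Jt: "J < t" "K < t" using JK(1) ci i by (auto simp: doubleton_eq_iff)
    note cj = cyc_col[OF t3 Jt(1)]
    have rowsJ: "\<And>x. x < t \<Longrightarrow> ?Y (R x) (n + s) \<Longrightarrow> x = i \<or> R x = l"
    proof -
      fix x assume x: "x < t" "?Y (R x) (n + s)"
      show "x = i \<or> R x = l"
      proof (cases "R x < m")
        case True
        then show ?thesis using stretch_col[OF assms(3) fin s(1) True] x l_def by simp
      next
        case False
        define s' where "s' = R x - m"
        have s': "s' < card Q" "R x = m + s'" using Rb[OF x(1)] False unfolding s'_def by auto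
        have "snd (?qs ! s') < n" using qs_facts[OF assms(3) fin s'(1)] by simp
        then have "s' = s" using x(2) stretch_row[OF assms(3) fin s'(1)] s'(2) by auto
        then show ?thesis using Rinj[OF x(1) i(1)] s s' by simp
      qed
    qed
    have "?Y (R J) (n+s)" "?Y (R (pc t J)) (n+s)" using BB cj Jt JK(2) by (metis cyc_row[OF t3 Jt(1)])+
    then obtain L where L: "L < t" "L \<noteq> i" "R L = l" "cycleC t L J"
      using rowsJ cj Jt BB JK(2) cyc_row[OF t3 Jt(1)] by metis
    have "?Y (R L) (C K)" using L kl stretch_old by (simp add: JK(3))
    then have "cycleC t L K" using BB[OF L(1) Jt(2)] L(3) by simp
    with L(4) JK(1) have "cycleC t L i" "cycleC t L (sc t i)" by (auto simp: doubleton_eq_iff)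
    then show False using cyc_uniq[OF t3 i(1)] L by blast
  next
    case False
    then have Rm: "\<And>i. i<t \<Longrightarrow> R i < m" by auto
    show False
    proof (cases "\<exists>j<t. n \<le> C j")
      case True
      then obtain j where j: "j<t" "n \<le> C j" by blast
      define s where "s = C j - n"
      have s: "s < card Q" "C j = n + s" using Cb[OF j(1)] j unfolding s_def by auto
      note cj = cyc_col[OF t3 j(1)]
      have "?Y (R j) (C j)" "?Y (R (pc t j)) (C j)" using BB cj j cyc_row[OF t3 j(1)] by auto
      then have "R j = R (pc t j)"
        using stretch_col[OF assms(3) fin s(1)] Rm cj j s(2) by simp
      then show False using Rinj cj j by metis
    next
      case False
      then have Cn: "\<And>j. j<t \<Longrightarrow> C j < n" by auto
      have "r ` {..<t} \<subseteq> {..<m}"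
      proof
        fix y assume "y \<in> r ` {..<t}"
        then obtain x where x: "x < t" "y = r x" by auto
        have "x = p (inv p x)" using p by (simp add: permutes_inverses(1))
        moreover have "inv p x < t" using x permutes_in_image[OF permutes_inv[OF p]] by simp
        ultimately show "y \<in> {..<m}" using Rm[of "inv p x"] x unfolding R_def by auto
      qed
      moreover have "c ` {..<t} \<subseteq> {..<n}"
      proof
        fix y assume "y \<in> c ` {..<t}"
        then obtain x where x: "x < t" "y = c x" by auto
        have "x = q (inv q x)" using q by (simp add: permutes_inverses(1))
        moreover have "inv q x < t" using x permutes_in_image[OF permutes_inv[OF q]] by simp
        ultimately show "y \<in> {..<n}" using Cn[of "inv q x"] x unfolding C_def by auto
      qed
      moreover have "is_cycle_matrix t (\<lambda>i j. X (r i) (c j))"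
      proof -
        have "\<forall>i<t. \<forall>j<t. X (r (p i)) (c (q j)) = cycleC t i j"
        proof (intro allI impI)
          fix i j assume ij: "i<t" "j<t"
          have "X (r (p i)) (c (q j)) = ?Y (R i) (C j)"
            using stretch_old Rm Cn ij unfolding R_def C_def by simp
          then show "X (r (p i)) (c (q j)) = cycleC t i j" using BB ij by simp
        qed
        then show ?thesis using t3 p q unfolding is_cycle_matrix_def by blast
      qed
      ultimately show False using assms(1)[unfolded totally_balanced_def, rule_format, OF t3, of r c] rc by blast
    qed
  qed
qed

end
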